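(* Let $(T,\mathcal T,\mu)$ be a finite positive (not necessarily complete) measure space, $S$ a separable complete metric space, and $N$ a positive integer. Let $\Gamma$ be a multifunction from $T$ to nonempty finite subsets of $S$ of cardinality at most $N$, which is measurable with respect to the $\mu$-completion $\mathcal T_\mu$ of $\mathcal T$. Then there exist $n\le N$ measurable maps $s_i:T_i\to S$, $1\le i\le n$, such that: $T_i\in\mathcal T$ for $1\le i\le n$; there is a set $T_0\in\mathcal T$ of full $\mu$-measure such that $\Gamma(t)=\{s_i(t):t\in T_i,\ 1\le i\le n\}$ for all $t\in T_0$; and if $t\in T_i\cap T_j$ with $i\ne j$ then $s_i(t)\ne s_j(t)$.
   Context: A multifunction $\Gamma$ from $T$ to $S$ assigns to each $t\in T$ a nonempty subset $\Gamma(t)\subset S$; its graph is $G(\Gamma)=\{(t,s)\in T\times S:s\in\Gamma(t)\}$. $\Gamma$ is measurable with respect to a $\sigma$-algebra $\mathcal T'$ on $T$ if $G(\Gamma)\in\mathcal T'\otimes\mathcal B(S)$, where $\mathcal B(S)$ is the Borel $\sigma$-algebra of $S$. A map $s_i:T_i\to S$ is measurable when $T_i$ carries the trace of $\mathcal T$ and $S$ its Borel $\sigma$-algebra. *)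

theory Defs
  imports "HOL-Analysis.Analysis"
begin

end

theory Submission
  imports Defs
begin
lemma open_Un_closed:
  fixes U :: "'a::metric_space set" assumes "open U"
  shows "\<exists>F::nat \<Rightarrow> 'a set. (\<forall>n. closed (F n)) \<and> U = (\<Union>n. F n)"
proof (cases "U = UNIV")
  case True then show ?thesis by (intro exI[of _ "\<lambda>_. UNIV"]) auto
next
  case False
  define F where "F n = {x. 1/real (Suc n) \<le> infdist x (-U)}" for n
  have cl: "\<forall>n. closed (F n)" unfolding F_def
    by (intro allI closed_Collect_le continuous_on_const continuous_on_infdist continuous_on_id)
  have eq: "U = (\<Union>n. F n)"
  proof safe
    fix x assume "x \<in> U"
    then have "infdist x (-U) \<noteq> 0" using in_closed_iff_infdist_zero[of "-U" x] False assms by auto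
    then have "infdist x (-U) > 0" using infdist_nonneg[of x "-U"] by linarith
    then obtain n where "inverse (real (Suc n)) < infdist x (-U)" using reals_Archimedean by blast
    then have "1/real (Suc n) \<le> infdist x (-U)" by (simp add: inverse_eq_divide)
    then have "x \<in> F n" by (simp add: F_def)
    then show "x \<in> (\<Union>n. F n)" by blast
  next
    fix x n assume "x \<in> F n"
    then have "1/real (Suc n) \<le> infdist x (-U)" by (simp add: F_def)
    moreover have "0 < 1/real (Suc n)" by simp
    ultimately have "infdist x (-U) > 0" by linarith
    then show "x \<in> U" using in_closed_iff_infdist_zero[of "-U" x] False assms by auto
  qed
  show ?thesis using cl eq by blast
qed

definition suslin :: "(nat list \<Rightarrow> 'x set) \<Rightarrow> 'x set" where
  "suslin A = (\<Union>f. \<Inter>k. A (map f [0..<k]))"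

lemma (in finite_measure) hull_exists:
  assumes "X \<subseteq> Y" "Y \<in> sets M"
  shows "\<exists>H\<in>sets M. X \<subseteq> H \<and> H \<subseteq> Y \<and> (\<forall>D\<in>sets M. X \<subseteq> D \<longrightarrow> measure M (H - D) = 0)"
proof -
  let ?K = "{D \<in> sets M. X \<subseteq> D \<and> D \<subseteq> Y}"
  define \<alpha> where "\<alpha> = Inf (measure M ` ?K)"
  have ne: "measure M ` ?K \<noteq> {}" using assms by auto
  have bdd: "bdd_below (measure M ` ?K)" by (auto intro: bdd_belowI[where m=0])
  have "\<forall>n::nat. \<exists>D\<in>?K. measure M D < \<alpha> + 1/(Suc n)"
  proof
    fix n :: nat
    have "Inf (measure M ` ?K) < \<alpha> + 1/Suc n" unfolding \<alpha>_def by simp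
    from cInf_lessD[OF ne this] show "\<exists>D\<in>?K. measure M D < \<alpha> + 1/(Suc n)" by blast
  qed
  then obtain D where D: "\<And>n. D n \<in> ?K" "\<And>n. measure M (D n) < \<alpha> + 1/Suc n" by metis
  define H where "H = (\<Inter>n. D n)"
  have "H \<subseteq> D 0" by (auto simp: H_def)
  with D(1)[of 0] D(1) have HK: "H \<in> ?K" unfolding H_def by auto
  have ge: "\<alpha> \<le> measure M E" if "E \<in> ?K" for E
    unfolding \<alpha>_def using that bdd by (intro cInf_lower) auto
  have Hle: "measure M H \<le> \<alpha>"
  proof (rule ccontr)
    assume "\<not> ?thesis"
    then have "measure M H - \<alpha> > 0" by simp
    then obtain n where n: "inverse (real (Suc n)) < measure M H - \<alpha>" using reals_Archimedean by blast
    have "measure M H \<le> measure M (D n)" using HK D(1)[of n] unfolding H_def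
      by (intro finite_measure_mono) auto
    moreover have "1/real (Suc n) = inverse (real (Suc n))" by (simp add: divide_inverse)
    ultimately show False using D(2)[of n] n by linarith
  qed
  have main: "\<forall>E\<in>sets M. X \<subseteq> E \<longrightarrow> measure M (H - E) = 0"
  proof (intro ballI impI)
    fix E assume E: "E \<in> sets M" "X \<subseteq> E"
    have "H \<inter> E \<in> ?K" using HK E by (intro CollectI conjI sets.Int) auto
    then have "\<alpha> \<le> measure M (H \<inter> E)" by (rule ge)
    moreover have "measure M (H - E) = measure M H - measure M (H \<inter> E)"
      using HK E by (simp add: finite_measure_Diff')
    moreover have "measure M (H - E) \<ge> 0" by simp
    ultimately show "measure M (H - E) = 0" using Hle by linarith
  qed
  have h1: "H \<in> sets M" "X \<subseteq> H" "H \<subseteq> Y" using HK by simp_all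
  show ?thesis by (rule bexI[of _ H], intro conjI, fact h1(2), fact h1(3), fact main, fact h1(1))
qed

lemma map_upt_Suc_Cons: "map g [0..<Suc k] = g 0 # map (\<lambda>i. g (Suc i)) [0..<k]"
  by (induct k) auto

lemma finite_measure_completion:
  assumes "finite_measure M" shows "finite_measure (completion M)"
proof -
  interpret finite_measure M by fact
  show ?thesis by (rule finite_measureI) simp
qed

lemma completion_null_subset:
  assumes "Z \<in> null_sets (completion M)" "W \<subseteq> Z"
  shows "W \<in> sets (completion M)"
proof -
  have "\<exists>N'\<in>null_sets M. Z \<subseteq> N'" using assms(1) by (simp only: null_sets_completion_iff2)
  then obtain N' where "N' \<in> null_sets M" "Z \<subseteq> N'" by blast
  then show ?thesis using assms(2) by (intro null_sets_completion[of N']) auto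
qed

lemma suslin_measurable:
  assumes fm: "finite_measure M" and A: "\<And>s. A s \<in> sets (completion M)"
  shows "suslin A \<in> sets (completion M)"
proof -
  let ?C = "completion M"
  interpret C: finite_measure ?C using fm by (rule finite_measure_completion)
  define R where "R s = {t. \<exists>f. map f [0..<length s] = s \<and> (\<forall>k. t \<in> A (map f [0..<k]))}" for s
  have RA: "R s \<subseteq> A s" for s
  proof
    fix t assume "t \<in> R s"
    then obtain f where f: "map f [0..<length s] = s" "\<forall>k. t \<in> A (map f [0..<k])" unfolding R_def by blast
    from f(2)[rule_format, of "length s"] f(1) show "t \<in> A s" by simp
  qed
  have "\<forall>s. \<exists>H. H \<in> sets ?C \<and> R s \<subseteq> H \<and> H \<subseteq> A s \<and> (\<forall>D\<in>sets ?C. R s \<subseteq> D \<longrightarrow> measure ?C (H - D) = 0)"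
  proof
    fix s
    from C.hull_exists[OF RA[of s] A[of s]] obtain H where "H \<in> sets ?C"
      "R s \<subseteq> H \<and> H \<subseteq> A s \<and> (\<forall>D\<in>sets ?C. R s \<subseteq> D \<longrightarrow> measure ?C (H - D) = 0)"
      by (rule bexE)
    then have "H \<in> sets ?C \<and> R s \<subseteq> H \<and> H \<subseteq> A s \<and> (\<forall>D\<in>sets ?C. R s \<subseteq> D \<longrightarrow> measure ?C (H - D) = 0)"
      by (rule conjI)
    then show "\<exists>H. H \<in> sets ?C \<and> R s \<subseteq> H \<and> H \<subseteq> A s \<and> (\<forall>D\<in>sets ?C. R s \<subseteq> D \<longrightarrow> measure ?C (H - D) = 0)"
      by (rule exI[of _ H])
  qed
  then have "\<exists>H. \<forall>s. H s \<in> sets ?C \<and> R s \<subseteq> H s \<and> H s \<subseteq> A s \<and> (\<forall>D\<in>sets ?C. R s \<subseteq> D \<longrightarrow> measure ?C (H s - D) = 0)"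
    by (rule choice)
  then obtain H where H: "\<And>s. H s \<in> sets ?C" "\<And>s. R s \<subseteq> H s" "\<And>s. H s \<subseteq> A s"
      "\<And>s D. D \<in> sets ?C \<Longrightarrow> R s \<subseteq> D \<Longrightarrow> measure ?C (H s - D) = 0"
    by blast
  have RU: "R s \<subseteq> (\<Union>j. H (s @ [j]))" for s
  proof
    fix t assume "t \<in> R s"
    then obtain f where f: "map f [0..<length s] = s" "\<forall>k. t \<in> A (map f [0..<k])" unfolding R_def by blast
    have "map f [0..<length (s @ [f (length s)])] = s @ [f (length s)]" using f(1) by simp
    then have "t \<in> R (s @ [f (length s)])" using f(2) unfolding R_def by blast
    then show "t \<in> (\<Union>j. H (s @ [j]))" using H(2) by blast
  qed
  define Z where "Z = (\<Union>s\<in>UNIV. H s - (\<Union>j. H (s @ [j])))"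
  have Znull: "Z \<in> null_sets ?C"
    unfolding Z_def
  proof (rule null_sets_UN')
    show "countable (UNIV :: nat list set)" by simp
  next
    fix s :: "nat list"
    have U: "(\<Union>j. H (s @ [j])) \<in> sets ?C" using H(1) by auto
    have m: "measure ?C (H s - (\<Union>j. H (s @ [j]))) = 0" by (rule H(4)[OF U RU])
    have S: "H s - (\<Union>j. H (s @ [j])) \<in> sets ?C" using H(1) U by auto
    show "H s - (\<Union>j. H (s @ [j])) \<in> null_sets ?C"
      using m S by (intro null_setsI) (simp_all add: C.emeasure_eq_measure)
  qed
  have sub: "H [] - Z \<subseteq> suslin A"
  proof
    fix t assume t: "t \<in> H [] - Z"
    have step: "\<exists>j. t \<in> H (s @ [j])" if "t \<in> H s" for s using that t unfolding Z_def by blast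
    define pick where "pick s = (SOME j. t \<in> H (s @ [j]))" for s
    define sq where "sq n = ((\<lambda>s. s @ [pick s]) ^^ n) []" for n
    have sqS: "sq (Suc n) = sq n @ [pick (sq n)]" for n by (simp add: sq_def)
    have inH: "t \<in> H (sq n)" for n
    proof (induct n)
      case 0 then show ?case using t by (simp add: sq_def)
    next
      case (Suc n) then show ?case using someI_ex[OF step[OF Suc]] by (simp add: sqS pick_def)
    qed
    define f where "f i = pick (sq i)" for i
    have sqf: "sq n = map f [0..<n]" for n
    proof (induct n)
      case 0 then show ?case by (simp add: sq_def)
    next
      case (Suc n) then show ?case by (simp add: sqS f_def)
    qed
    have "t \<in> A (map f [0..<k])" for k using inH[of k] H(3)[of "sq k"] unfolding sqf by blast
    then show "t \<in> suslin A" unfolding suslin_def by (intro UN_I[of f]) auto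
  qed
  have sup: "suslin A \<subseteq> H []"
  proof -
    have "suslin A \<subseteq> R []" unfolding suslin_def R_def by auto
    then show ?thesis using H(2) by blast
  qed
  have "suslin A = (H [] - Z) \<union> (suslin A \<inter> Z)" using sub sup by blast
  moreover have "H [] - Z \<in> sets ?C" using H(1) Znull by auto
  moreover have "suslin A \<inter> Z \<in> sets ?C" by (rule completion_null_subset[OF Znull]) auto
  ultimately show ?thesis by (metis sets.Un)
qed

definition Sus :: "('x set \<Rightarrow> bool) \<Rightarrow> 'x set set" where
  "Sus P = {suslin A | A. \<forall>s. P (A s)}"

lemma suslin_subset:
  assumes "\<And>s. A s \<subseteq> \<Omega>" shows "suslin A \<subseteq> \<Omega>"
proof
  fix t assume "t \<in> suslin A"
  then obtain f where "\<forall>k. t \<in> A (map f [0..<k])" unfolding suslin_def by blast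
  from this[rule_format, of 0] have "t \<in> A []" by simp
  then show "t \<in> \<Omega>" using assms by blast
qed

lemma Sus_subset:
  assumes "\<And>X. P X \<Longrightarrow> X \<subseteq> \<Omega>" "E \<in> Sus P" shows "E \<subseteq> \<Omega>"
  using assms suslin_subset unfolding Sus_def by blast

lemma Sus_base:
  assumes "P X" shows "X \<in> Sus P"
proof -
  have "suslin (\<lambda>s. X) = X" unfolding suslin_def by simp
  then show ?thesis unfolding Sus_def using assms by (intro CollectI exI[of _ "\<lambda>s. X"]) simp
qed

lemma Sus_UN:
  assumes top: "P \<Omega>" and sub: "\<And>X. P X \<Longrightarrow> X \<subseteq> \<Omega>" and X: "\<And>n::nat. X n \<in> Sus P"
  shows "(\<Union>n. X n) \<in> Sus P"
proof -
  have "\<forall>n. \<exists>A. X n = suslin A \<and> (\<forall>s. P (A s))" using X unfolding Sus_def by blast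
  then have "\<exists>A. \<forall>n. X n = suslin (A n) \<and> (\<forall>s. P (A n s))" by (rule choice)
  then obtain A where A: "\<And>n. X n = suslin (A n)" "\<And>n s. P (A n s)" by blast
  define B where "B s = (case s of [] \<Rightarrow> \<Omega> | n # s' \<Rightarrow> A n s')" for s
  have PB: "P (B s)" for s by (cases s) (simp_all add: B_def top A(2))
  have eq: "suslin B = (\<Union>n. suslin (A n))"
  proof (intro equalityI subsetI)
    fix t assume "t \<in> suslin B"
    then obtain g where g: "\<forall>k. t \<in> B (map g [0..<k])" unfolding suslin_def by blast
    have "t \<in> A (g 0) (map (\<lambda>i. g (Suc i)) [0..<k])" for k
    proof -
      have "t \<in> B (map g [0..<Suc k])" using g by blast
      then have "t \<in> B (g 0 # map (\<lambda>i. g (Suc i)) [0..<k])" by (simp only: map_upt_Suc_Cons)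
      then show ?thesis by (simp add: B_def)
    qed
    then show "t \<in> (\<Union>n. suslin (A n))" unfolding suslin_def by blast
  next
    fix t assume "t \<in> (\<Union>n. suslin (A n))"
    then obtain n f where f: "\<forall>k. t \<in> A n (map f [0..<k])" unfolding suslin_def by blast
    define g where "g = case_nat n f"
    have "t \<in> B (map g [0..<k])" for k
    proof (cases k)
      case 0
      have "t \<in> A n []" using f[rule_format, of 0] by simp
      then have "t \<in> \<Omega>" using sub[OF A(2)] by blast
      then show ?thesis using 0 by (simp add: B_def)
    next
      case (Suc k')
      have "t \<in> B (g 0 # map (\<lambda>i. g (Suc i)) [0..<k'])" using f[rule_format, of k'] by (simp add: B_def g_def)
      then show ?thesis using Suc by (simp only: map_upt_Suc_Cons)
    qed
    then show "t \<in> suslin B" unfolding suslin_def by blast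
  qed
  have "(\<Union>n. X n) = suslin B" using A(1) eq by simp
  then show ?thesis unfolding Sus_def using PB by (intro CollectI exI[of _ B]) simp
qed

lemma Sus_INT:
  assumes top: "P \<Omega>" and sub: "\<And>X. P X \<Longrightarrow> X \<subseteq> \<Omega>" and int: "\<And>X Y. P X \<Longrightarrow> P Y \<Longrightarrow> P (X \<inter> Y)"
    and X: "\<And>n::nat. X n \<in> Sus P"
  shows "(\<Inter>n. X n) \<in> Sus P"
proof -
  have "\<forall>n. \<exists>A. X n = suslin A \<and> (\<forall>s. P (A s))" using X unfolding Sus_def by blast
  then have "\<exists>A. \<forall>n. X n = suslin (A n) \<and> (\<forall>s. P (A n s))" by (rule choice)
  then obtain A where A: "\<And>n. X n = suslin (A n)" "\<And>n s. P (A n s)" by blast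
  define Ok where "Ok L = {(n,m). n < L \<and> m < L \<and> (\<forall>i<m. prod_encode (n,i) < L)}" for L :: nat
  define B where "B s = \<Omega> \<inter> \<Inter>((\<lambda>(n,m). A n (map (\<lambda>i. s ! prod_encode (n,i)) [0..<m])) ` Ok (length s))" for s
  have fin: "finite (Ok L)" for L
    by (rule finite_subset[of _ "{..<L} \<times> {..<L}"]) (auto simp: Ok_def)
  have Pfin: "P (\<Omega> \<inter> \<Inter>(Y ` I))" if "finite I" "\<forall>i\<in>I. P (Y i)" for I and Y :: "nat \<times> nat \<Rightarrow> _"
    using that
  proof (induct I rule: finite_induct)
    case empty show ?case using top by simp
  next
    case (insert i I)
    have "\<Omega> \<inter> \<Inter>(Y ` insert i I) = Y i \<inter> (\<Omega> \<inter> \<Inter>(Y ` I))" by auto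
    then show ?case using insert int by simp
  qed
  have PB: "P (B s)" for s
    unfolding B_def by (rule Pfin[OF fin]) (auto simp: A(2) split: prod.split)
  have eq: "suslin B = (\<Inter>n. suslin (A n))"
  proof (intro equalityI subsetI)
    fix t assume "t \<in> suslin B"
    then obtain g where g: "\<forall>k. t \<in> B (map g [0..<k])" unfolding suslin_def by blast
    show "t \<in> (\<Inter>n. suslin (A n))"
    proof
      fix n
      have "t \<in> A n (map (\<lambda>i. g (prod_encode (n,i))) [0..<m])" for m
      proof -
        define L where "L = Suc (n + m + (\<Sum>i<m. prod_encode (n,i)))"
        have le: "prod_encode (n,i) < L" if "i < m" for i
        proof -
          have "prod_encode (n,i) \<le> (\<Sum>i<m. prod_encode (n,i))"
            using that by (intro member_le_sum) auto
          then show ?thesis unfolding L_def by simp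
        qed
        have ok: "(n,m) \<in> Ok L" using le unfolding Ok_def L_def by auto
        have "t \<in> B (map g [0..<L])" using g by blast
        then have "t \<in> A n (map (\<lambda>i. (map g [0..<L]) ! prod_encode (n,i)) [0..<m])"
          using ok unfolding B_def by auto
        moreover have "map (\<lambda>i. (map g [0..<L]) ! prod_encode (n,i)) [0..<m] = map (\<lambda>i. g (prod_encode (n,i))) [0..<m]"
          using le by (intro map_cong) auto
        ultimately show ?thesis by simp
      qed
      then show "t \<in> suslin (A n)" unfolding suslin_def by (intro UN_I[of "\<lambda>i. g (prod_encode (n,i))"]) auto
    qed
  next
    fix t assume "t \<in> (\<Inter>n. suslin (A n))"
    then have "\<forall>n. \<exists>f. \<forall>m. t \<in> A n (map f [0..<m])" by (simp add: suslin_def)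
    then have "\<exists>F. \<forall>n m. t \<in> A n (map (F n) [0..<m])" by (rule choice)
    then obtain F where F: "\<And>n m. t \<in> A n (map (F n) [0..<m])" by blast
    define g where "g p = F (fst (prod_decode p)) (snd (prod_decode p))" for p
    have tO: "t \<in> \<Omega>" using F[of 0 0] sub[OF A(2)] by auto
    have "t \<in> B (map g [0..<k])" for k
    proof -
      have "t \<in> A n (map (\<lambda>i. (map g [0..<k]) ! prod_encode (n,i)) [0..<m])" if "(n,m) \<in> Ok k" for n m
      proof -
        have eq: "map (\<lambda>i. (map g [0..<k]) ! prod_encode (n,i)) [0..<m] = map (F n) [0..<m]"
          using that by (intro map_cong) (auto simp: Ok_def g_def)
        show ?thesis unfolding eq by (rule F)
      qed
      then show ?thesis using tO unfolding B_def by auto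
    qed
    then show "t \<in> suslin B" unfolding suslin_def by (intro UN_I[of g]) auto
  qed
  have "(\<Inter>n. X n) = suslin B" using A(1) eq by simp
  then show ?thesis unfolding Sus_def using PB by (intro CollectI exI[of _ B]) simp
qed

lemma Sus_Un:
  assumes "P \<Omega>" "\<And>X. P X \<Longrightarrow> X \<subseteq> \<Omega>" "E \<in> Sus P" "E' \<in> Sus P"
  shows "E \<union> E' \<in> Sus P"
proof -
  have "(\<Union>n::nat. if n = 0 then E else E') \<in> Sus P" using assms by (intro Sus_UN) auto
  moreover have "(\<Union>n::nat. if n = 0 then E else E') = E \<union> E'" by (auto split: if_splits)
  ultimately show ?thesis by simp
qed

lemma Sus_Int:
  assumes "P \<Omega>" "\<And>X. P X \<Longrightarrow> X \<subseteq> \<Omega>" "\<And>X Y. P X \<Longrightarrow> P Y \<Longrightarrow> P (X \<inter> Y)" "E \<in> Sus P" "E' \<in> Sus P"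
  shows "E \<inter> E' \<in> Sus P"
proof -
  have "(\<Inter>n::nat. if n = 0 then E else E') \<in> Sus P" using assms by (intro Sus_INT) auto
  moreover have "(\<Inter>n::nat. if n = 0 then E else E') = E \<inter> E'" by (auto split: if_splits)
  ultimately show ?thesis by simp
qed

definition Rect :: "'a measure \<Rightarrow> ('a \<times> 'b::metric_space) set \<Rightarrow> bool" where
  "Rect M X \<longleftrightarrow> (\<exists>a F. X = a \<times> F \<and> a \<in> sets (completion M) \<and> closed F)"

lemma RectI: "a \<in> sets (completion M) \<Longrightarrow> closed F \<Longrightarrow> Rect M (a \<times> F)"
  unfolding Rect_def by blast

lemma Rect_top: "Rect M (space M \<times> (UNIV :: 'b::metric_space set))"
proof -
  have "space (completion M) \<in> sets (completion M)" by (rule sets.top)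
  then show ?thesis by (intro RectI) simp_all
qed

lemma Rect_sub: "Rect M X \<Longrightarrow> X \<subseteq> space M \<times> UNIV"
  unfolding Rect_def using sets.sets_into_space[of _ "completion M"] by fastforce

lemma Rect_int: "Rect M X \<Longrightarrow> Rect M Y \<Longrightarrow> Rect M (X \<inter> Y)"
proof -
  assume "Rect M X" "Rect M Y"
  then obtain a F b G where X: "X = a \<times> F" "a \<in> sets (completion M)" "closed F"
    and Y: "Y = b \<times> G" "b \<in> sets (completion M)" "closed G" unfolding Rect_def by blast
  have "X \<inter> Y = (a \<inter> b) \<times> (F \<inter> G)" using X Y by auto
  then show ?thesis using X Y by (simp add: RectI sets.Int closed_Int)
qed

lemma RSus_UN: "(\<And>n::nat. X n \<in> Sus (Rect M)) \<Longrightarrow> (\<Union>n. X n) \<in> Sus (Rect M)"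
  by (rule Sus_UN[where P="Rect M" and \<Omega>="space M \<times> UNIV", OF Rect_top Rect_sub])

lemma RSus_INT: "(\<And>n::nat. X n \<in> Sus (Rect M)) \<Longrightarrow> (\<Inter>n. X n) \<in> Sus (Rect M)"
  by (rule Sus_INT[where P="Rect M" and \<Omega>="space M \<times> UNIV", OF Rect_top Rect_sub Rect_int])

lemma RSus_Un: "X \<in> Sus (Rect M) \<Longrightarrow> Y \<in> Sus (Rect M) \<Longrightarrow> X \<union> Y \<in> Sus (Rect M)"
  by (rule Sus_Un[where P="Rect M" and \<Omega>="space M \<times> UNIV", OF Rect_top Rect_sub])

lemma RSus_Int: "X \<in> Sus (Rect M) \<Longrightarrow> Y \<in> Sus (Rect M) \<Longrightarrow> X \<inter> Y \<in> Sus (Rect M)"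
  by (rule Sus_Int[where P="Rect M" and \<Omega>="space M \<times> UNIV", OF Rect_top Rect_sub Rect_int])

lemma RSus_sub: "X \<in> Sus (Rect M) \<Longrightarrow> X \<subseteq> space M \<times> UNIV"
  by (rule Sus_subset[where P="Rect M" and \<Omega>="space M \<times> UNIV", OF Rect_sub])

lemma RSus_base: "Rect M X \<Longrightarrow> X \<in> Sus (Rect M)"
  by (rule Sus_base)

definition DD :: "'a measure \<Rightarrow> ('a \<times> 'b::metric_space) set \<Rightarrow> bool" where
  "DD M E \<longleftrightarrow> E \<in> Sus (Rect M) \<and> (space M \<times> UNIV) - E \<in> Sus (Rect M)"

lemma DD_Int:
  assumes "DD M X" "DD M Y" shows "DD M (X \<inter> Y)"
proof -
  have "(space M \<times> UNIV) - (X \<inter> Y) = ((space M \<times> UNIV) - X) \<union> ((space M \<times> UNIV) - Y)" by blast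
  then show ?thesis using assms unfolding DD_def by (simp add: RSus_Int RSus_Un)
qed

lemma DD_base: "Rect M X \<Longrightarrow> Rect M ((space M \<times> UNIV) - X) \<Longrightarrow> DD M X"
  unfolding DD_def by (simp add: RSus_base)

lemma DD_UN:
  assumes "\<And>n::nat. DD M (X n)" shows "DD M (\<Union>n. X n)"
proof -
  have "(space M \<times> UNIV) - (\<Union>n. X n) = (\<Inter>n. (space M \<times> UNIV) - X n)" by blast
  moreover have "(\<Inter>n. (space M \<times> UNIV) - X n) \<in> Sus (Rect M)"
    by (rule RSus_INT) (use assms in \<open>simp add: DD_def\<close>)
  moreover have "(\<Union>n. X n) \<in> Sus (Rect M)"
    by (rule RSus_UN) (use assms in \<open>simp add: DD_def\<close>)
  ultimately show ?thesis unfolding DD_def by simp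
qed

lemma DD_compl:
  assumes "DD M X" shows "DD M ((space M \<times> UNIV) - X)"
proof -
  have "X \<subseteq> space M \<times> UNIV" using assms unfolding DD_def by (simp add: RSus_sub)
  then have "(space M \<times> UNIV) - ((space M \<times> UNIV) - X) = X" by blast
  then show ?thesis using assms unfolding DD_def by simp
qed

lemma DD_empty: "DD M {}"
proof -
  have "{} \<in> sets (completion M)" by simp
  then have "Rect M ({} \<times> (UNIV :: 'b set))" by (intro RectI) simp_all
  then have "Rect M ({} :: ('a \<times> 'b::metric_space) set)" by simp
  then show ?thesis by (intro DD_base) (simp_all add: Rect_top)
qed

lemma DD_left:
  assumes "a \<in> sets (completion M)" shows "DD M (a \<times> (UNIV :: 'b::metric_space set))"
proof (rule DD_base)
  show "Rect M (a \<times> (UNIV :: 'b set))" using assms by (intro RectI) simp_all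
  have "(space M \<times> UNIV) - a \<times> (UNIV :: 'b set) = (space M - a) \<times> UNIV" by blast
  moreover have "space M - a \<in> sets (completion M)" using assms sets.compl_sets[of a "completion M"] by simp
  ultimately show "Rect M ((space M \<times> UNIV) - a \<times> (UNIV :: 'b set))" by (simp add: RectI)
qed

lemma DD_right:
  fixes b :: "'b::metric_space set"
  assumes "b \<in> sigma_sets UNIV (Collect closed)" shows "DD M (space M \<times> b)"
  using assms
proof induct
  case (Basic F)
  then have cF: "closed F" by simp
  have sp: "space M \<in> sets (completion M)" using sets.top[of "completion M"] by simp
  obtain G :: "nat \<Rightarrow> 'b set" where G: "\<forall>n. closed (G n)" "-F = (\<Union>n. G n)"
    using open_Un_closed[of "-F"] cF by auto
  have "(space M \<times> UNIV) - space M \<times> F = (\<Union>n. space M \<times> G n)" using G(2) by blast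
  moreover have "(\<Union>n. space M \<times> G n) \<in> Sus (Rect M)"
    using G(1) sp by (intro RSus_UN RSus_base RectI) auto
  moreover have "space M \<times> F \<in> Sus (Rect M)" using sp cF by (intro RSus_base RectI)
  ultimately show ?case unfolding DD_def by simp
next
  case Empty then show ?case using DD_empty by simp
next
  case (Compl b)
  have "space M \<times> (UNIV - b) = (space M \<times> UNIV) - space M \<times> b" by blast
  then show ?case using DD_compl[OF Compl(2)] by simp
next
  case (Union B)
  have "space M \<times> \<Union>(range B) = (\<Union>n. space M \<times> B n)" by blast
  then show ?case using DD_UN[OF Union(2)] by simp
qed

lemma DD_sets:
  assumes "E \<in> sets (completion M \<Otimes>\<^sub>M (borel :: 'b::metric_space measure))"
  shows "DD M E"
proof -
  have "E \<in> sigma_sets (space M \<times> UNIV) {a \<times> b | a b. a \<in> sets (completion M) \<and> b \<in> sets (borel :: 'b measure)}"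
    using assms by (simp add: sets_pair_measure)
  then show ?thesis
  proof induct
    case (Basic X)
    then obtain a b where X: "X = a \<times> b" "a \<in> sets (completion M)" "b \<in> sets (borel :: 'b measure)" by blast
    have a_sub: "a \<subseteq> space M" using sets.sets_into_space[OF X(2)] by simp
    have "b \<in> sigma_sets UNIV (Collect closed)"
      using X(3) by (simp add: borel_eq_closed)
    then have D2: "DD M (space M \<times> b)" by (rule DD_right)
    have "X = (a \<times> UNIV) \<inter> (space M \<times> b)" using X(1) a_sub by blast
    then show ?case using DD_Int[OF DD_left[OF X(2)] D2] by simp
  next
    case Empty then show ?case by (rule DD_empty)
  next
    case (Compl X) show ?case by (rule DD_compl[OF Compl(2)])
  next
    case (Union X) show ?case by (rule DD_UN[OF Union(2)])
  qed
qed

lemma dense_seq: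
  obtains q :: "nat \<Rightarrow> 'b::polish_space" where "\<And>x e. e > 0 \<Longrightarrow> \<exists>j. dist (q j) x < e"
proof -
  obtain D :: "'b set" where D: "countable D" "\<And>X. open X \<Longrightarrow> X \<noteq> {} \<Longrightarrow> \<exists>d\<in>D. d \<in> X"
    using countable_dense_exists by blast
  have "\<exists>j. dist (from_nat_into D j) x < e" if "e > 0" for x e
  proof -
    have "ball x e \<noteq> {}" using that by auto
    then obtain d where "d \<in> D" "d \<in> ball x e" using D(2)[of "ball x e"] by auto
    moreover obtain j where "from_nat_into D j = d" using from_nat_into_surj[OF D(1) \<open>d \<in> D\<close>] by blast
    ultimately show ?thesis by (auto simp: dist_commute)
  qed
  then show ?thesis using that by blast
qed

lemma proj_Sus:
  fixes E :: "('a \<times> 'b::polish_space) set"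
  assumes fm: "finite_measure M" and E: "E \<in> Sus (Rect M)"
  shows "fst ` E \<in> sets (completion M)"
proof -
  let ?C = "completion M"
  obtain X where X: "E = suslin X" "\<And>s. Rect M (X s)" using E unfolding Sus_def by blast
  have "\<forall>s. \<exists>p. X s = fst p \<times> snd p \<and> fst p \<in> sets ?C \<and> closed (snd p)"
  proof
    fix s
    from X(2)[of s] obtain a F where "X s = a \<times> F" "a \<in> sets ?C" "closed F" unfolding Rect_def by blast
    then have "X s = fst (a,F) \<times> snd (a,F) \<and> fst (a,F) \<in> sets ?C \<and> closed (snd (a,F))" by simp
    then show "\<exists>p. X s = fst p \<times> snd p \<and> fst p \<in> sets ?C \<and> closed (snd p)" by (rule exI)
  qed
  then have "\<exists>p. \<forall>s. X s = fst (p s) \<times> snd (p s) \<and> fst (p s) \<in> sets ?C \<and> closed (snd (p s))"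
    by (rule choice)
  then obtain p where p: "\<And>s. X s = fst (p s) \<times> snd (p s)" "\<And>s. fst (p s) \<in> sets ?C" "\<And>s. closed (snd (p s))"
    by blast
  define a where "a s = fst (p s)" for s
  define F where "F s = snd (p s)" for s
  have Xa: "X s = a s \<times> F s" "a s \<in> sets ?C" "closed (F s)" for s using p unfolding a_def F_def by auto
  obtain q :: "nat \<Rightarrow> 'b" where q: "\<And>x e. e > 0 \<Longrightarrow> \<exists>j. dist (q j) x < e" using dense_seq by blast
  define fs where "fs s = map (\<lambda>p. fst (prod_decode p)) s" for s
  define c where "c i p = cball (q (snd (prod_decode p))) ((1/2::real)^i)" for i p
  define F' where "F' s = (\<Inter>k\<in>{..length s}. F (take k (fs s))) \<inter> (\<Inter>i\<in>{..<length s}. c i (s!i))" for s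
  define A where "A s = (if F' s = {} then {} else a (fs s))" for s
  have A_sets: "A s \<in> sets ?C" for s unfolding A_def using Xa(2) by simp
  have F'_eq: "F' (map g [0..<L]) = (\<Inter>k\<in>{..L}. F (map (\<lambda>i. fst (prod_decode (g i))) [0..<k])) \<inter>
      (\<Inter>i\<in>{..<L}. c i (g i))" for g L
  proof -
    have 1: "take k (fs (map g [0..<L])) = map (\<lambda>i. fst (prod_decode (g i))) [0..<k]" if "k \<le> L" for k
      using that by (simp add: fs_def take_map)
    have 2: "(\<Inter>i\<in>{..<length (map g [0..<L])}. c i (map g [0..<L] ! i)) = (\<Inter>i\<in>{..<L}. c i (g i))"
      by (intro INF_cong) auto
    have 3: "(\<Inter>k\<in>{..length (map g [0..<L])}. F (take k (fs (map g [0..<L])))) =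
        (\<Inter>k\<in>{..L}. F (map (\<lambda>i. fst (prod_decode (g i))) [0..<k]))"
      by (intro INF_cong) (auto simp: 1)
    show ?thesis unfolding F'_def 2 3 ..
  qed
  have "suslin A = fst ` E"
  proof (intro equalityI subsetI)
    fix t assume "t \<in> suslin A"
    then obtain g where g: "\<And>L. t \<in> A (map g [0..<L])" unfolding suslin_def by blast
    define f where "f i = fst (prod_decode (g i))" for i
    define S where "S L = F' (map g [0..<L])" for L
    have S_eq: "S L = (\<Inter>k\<in>{..L}. F (map f [0..<k])) \<inter> (\<Inter>i\<in>{..<L}. c i (g i))" for L
      unfolding S_def F'_eq f_def by simp
    have ne: "S L \<noteq> {}" for L using g[of L] unfolding A_def S_def by (auto split: if_splits)
    have ta: "t \<in> a (map f [0..<L])" for L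
    proof -
      have "fs (map g [0..<L]) = map f [0..<L]" by (simp add: fs_def f_def)
      then show ?thesis using g[of L] unfolding A_def by (auto split: if_splits)
    qed
    have cl: "closed (S L)" for L unfolding S_eq c_def using Xa(3) by (intro closed_Int closed_INT) auto
    have dec: "S n \<subseteq> S m" if "m \<le> n" for m n unfolding S_eq using that by auto
    have small: "\<exists>n. \<forall>x\<in>S n. \<forall>y\<in>S n. dist x y < e" if "e > 0" for e
    proof -
      have "\<exists>i. (1/2::real)^i < e/2" using real_arch_pow_inv[of "e/2" "1/2"] that by simp
      then obtain i where i: "(1/2::real)^i < e/2" by blast
      have "dist x y < e" if "x \<in> S (Suc i)" "y \<in> S (Suc i)" for x y
      proof -
        have "x \<in> c i (g i)" "y \<in> c i (g i)" using that unfolding S_eq by auto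
        then have "dist (q (snd (prod_decode (g i)))) x \<le> (1/2)^i" "dist (q (snd (prod_decode (g i)))) y \<le> (1/2)^i"
          unfolding c_def by auto
        then have "dist x y \<le> 2 * (1/2)^i" using dist_triangle[of x y "q (snd (prod_decode (g i)))"]
          by (simp add: dist_commute)
        then show ?thesis using i by simp
      qed
      then show ?thesis by blast
    qed
    obtain x where x: "\<And>n. x \<in> S n" using decreasing_closed_nest[of S, OF cl ne dec small] by blast
    have "x \<in> F (map f [0..<k])" for k using x[of k] unfolding S_eq by auto
    then have "(t, x) \<in> X (map f [0..<k])" for k using ta Xa(1) by simp
    then have "(t, x) \<in> E" unfolding X(1) suslin_def by (intro UN_I[of f]) auto
    then show "t \<in> fst ` E" by force
  next
    fix t assume "t \<in> fst ` E"
    then obtain x where "(t, x) \<in> suslin X" using X(1) by force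
    then obtain f where f: "\<And>k. (t, x) \<in> X (map f [0..<k])" unfolding suslin_def by blast
    have "\<forall>i. \<exists>j. dist (q j) x < (1/2::real)^i" using q by simp
    then have "\<exists>J. \<forall>i. dist (q (J i)) x < (1/2::real)^i" by (rule choice)
    then obtain J where J: "\<And>i. dist (q (J i)) x < (1/2::real)^i" by blast
    define g where "g i = prod_encode (f i, J i)" for i
    have "t \<in> A (map g [0..<L])" for L
    proof -
      have fx: "x \<in> F (map f [0..<k])" "t \<in> a (map f [0..<k])" for k using f[of k] Xa(1) by auto
      have "x \<in> c i (g i)" for i using J[of i] unfolding c_def g_def by (simp add: less_imp_le)
      then have "x \<in> F' (map g [0..<L])" unfolding F'_eq g_def using fx by simp
      moreover have "fs (map g [0..<L]) = map f [0..<L]" by (simp add: fs_def g_def)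
      ultimately show ?thesis unfolding A_def using fx by auto
    qed
    then show "t \<in> suslin A" unfolding suslin_def by (intro UN_I[of g]) auto
  qed
  moreover have "suslin A \<in> sets ?C" by (rule suslin_measurable[OF fm A_sets])
  ultimately show ?thesis by simp
qed

lemma proj_meas:
  fixes E :: "('a \<times> 'b::polish_space) set"
  assumes fm: "finite_measure M" and E: "E \<in> sets (completion M \<Otimes>\<^sub>M borel)"
  shows "fst ` E \<in> sets (completion M)"
  using proj_Sus[OF fm] DD_sets[OF E] unfolding DD_def by blast

lemma sep_seq:
  obtains U :: "nat \<Rightarrow> 'b::polish_space set"
  where "\<And>n. open (U n)" "\<And>x y. x \<noteq> y \<Longrightarrow> \<exists>n. x \<in> U n \<and> y \<notin> U n"
proof -
  obtain B :: "'b set set" where B: "countable B" "topological_basis B" using ex_countable_basis by blast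
  have Bne: "B \<noteq> {}"
  proof -
    obtain x :: 'b where True by blast
    obtain V where "V \<in> B" using topological_basisE[OF B(2) open_UNIV, of x] by blast
    then show ?thesis by blast
  qed
  have "open (from_nat_into B n)" for n using from_nat_into[OF Bne] topological_basis_open[OF B(2)] by blast
  moreover have "\<exists>n. x \<in> from_nat_into B n \<and> y \<notin> from_nat_into B n" if "x \<noteq> y" for x y
  proof -
    have "open (- {y})" by (simp add: open_Compl)
    moreover have "x \<in> - {y}" using that by simp
    ultimately obtain V where V: "V \<in> B" "x \<in> V" "V \<subseteq> - {y}" using topological_basisE[OF B(2)] by metis
    obtain n where "from_nat_into B n = V" using from_nat_into_surj[OF B(1) V(1)] by blast
    then show ?thesis using V by blast
  qed
  ultimately show ?thesis using that by blast
qed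

lemma compl_split:
  assumes "X \<in> sets (completion M)"
  shows "\<exists>S N'. S \<in> sets M \<and> N' \<in> null_sets M \<and> S \<subseteq> X \<and> X \<subseteq> S \<union> N'"
proof -
  from assms obtain S N N' where "X = S \<union> N" "N \<subseteq> N'" "N' \<in> null_sets M" "S \<in> sets M"
    by (rule sets_completionE)
  then show ?thesis by blast
qed

lemma compl_fix:
  fixes f :: "'a \<Rightarrow> 'b::polish_space"
  assumes T: "T \<in> sets (completion M)" and f: "f \<in> measurable (restrict_space (completion M) T) borel"
  shows "\<exists>Z\<in>null_sets M. T - Z \<in> sets M \<and> f \<in> measurable (restrict_space M (T - Z)) borel"
proof -
  obtain B :: "'b set set" where B: "countable B" "topological_basis B" using ex_countable_basis by blast
  have Tsp: "T \<subseteq> space M" using sets.sets_into_space[OF T] by simp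
  have pre: "f -` b \<inter> T \<in> sets (completion M)" if "b \<in> B" for b
  proof -
    have "b \<in> sets borel" using topological_basis_open[OF B(2) that] by simp
    then have "f -` b \<inter> space (restrict_space (completion M) T) \<in> sets (restrict_space (completion M) T)"
      by (rule measurable_sets[OF f])
    moreover have "space (restrict_space (completion M) T) = T" using Tsp by (auto simp: space_restrict_space)
    moreover have "T \<inter> space (completion M) \<in> sets (completion M)" using T Tsp by (simp add: Int_absorb2)
    ultimately show ?thesis using sets_restrict_space_iff[of T "completion M"] by simp
  qed
  have "\<forall>b\<in>B. \<exists>p. fst p \<in> sets M \<and> snd p \<in> null_sets M \<and> fst p \<subseteq> f -` b \<inter> T \<and> f -` b \<inter> T \<subseteq> fst p \<union> snd p"
    using compl_split[OF pre] by auto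
  then obtain p where p: "\<And>b. b \<in> B \<Longrightarrow> fst (p b) \<in> sets M \<and> snd (p b) \<in> null_sets M \<and> fst (p b) \<subseteq> f -` b \<inter> T \<and> f -` b \<inter> T \<subseteq> fst (p b) \<union> snd (p b)"
    by (metis bchoice)
  obtain ST NT where ST: "ST \<in> sets M" "NT \<in> null_sets M" "ST \<subseteq> T" "T \<subseteq> ST \<union> NT"
    using compl_split[OF T] by blast
  define Z where "Z = NT \<union> (\<Union>b\<in>B. snd (p b))"
  have Z: "Z \<in> null_sets M" unfolding Z_def
    using p B(1) ST(2) by (intro null_sets.Un null_sets_UN') auto
  have Zs: "Z \<in> sets M" using Z by auto
  have TZ: "T - Z = ST - Z" using ST unfolding Z_def by blast
  have TZs: "T - Z \<in> sets M" unfolding TZ using ST(1) Zs by auto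
  have sp: "space (restrict_space M (T - Z)) = T - Z" using Tsp by (auto simp: space_restrict_space)
  have "f \<in> measurable (restrict_space M (T - Z)) (sigma UNIV B)"
  proof (rule measurable_measure_of)
    show "B \<subseteq> Pow UNIV" by simp
    show "f \<in> space (restrict_space M (T - Z)) \<rightarrow> UNIV" by simp
    fix b assume b: "b \<in> B"
    have "f -` b \<inter> (T - Z) = fst (p b) - Z" using p[OF b] unfolding Z_def using b by blast
    moreover have "fst (p b) - Z \<in> sets M" using p[OF b] Zs by auto
    moreover have "fst (p b) - Z \<subseteq> T - Z" using p[OF b] by blast
    ultimately show "f -` b \<inter> space (restrict_space M (T - Z)) \<in> sets (restrict_space M (T - Z))"
      unfolding sp using TZs sets_restrict_space_iff[of "T - Z" M] by (simp add: Int_absorb2 Tsp Diff_subset subset_trans)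
  qed
  then have "f \<in> measurable (restrict_space M (T - Z)) borel"
    by (simp add: borel_eq_countable_basis[OF B])
  then show ?thesis using Z TZs by blast
qed

primrec Gi :: "(nat \<Rightarrow> 'b set) \<Rightarrow> ('a \<times> 'b) set \<Rightarrow> nat \<Rightarrow> ('a \<times> 'b) set" where
  "Gi U G 0 = G"
| "Gi U G (Suc n) = {z \<in> Gi U G n. snd z \<in> U n \<or> fst z \<notin> fst ` (Gi U G n \<inter> (UNIV \<times> U n))}"

definition Sel :: "(nat \<Rightarrow> 'b set) \<Rightarrow> ('a \<times> 'b) set \<Rightarrow> ('a \<times> 'b) set" where
  "Sel U G = (\<Inter>n. Gi U G n)"

definition sec :: "('a \<times> 'b) set \<Rightarrow> 'a \<Rightarrow> 'b set" where "sec G t = {x. (t,x) \<in> G}"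

lemma sec_Diff: "sec (X - Y) t = sec X t - sec Y t" by (auto simp: sec_def)

lemma Gi_meas:
  fixes G :: "('a \<times> 'b::polish_space) set"
  assumes fm: "finite_measure M" and G: "G \<in> sets (completion M \<Otimes>\<^sub>M borel)" and U: "\<And>n. open (U n)"
  shows "Gi U G n \<in> sets (completion M \<Otimes>\<^sub>M borel)"
proof (induct n)
  case 0 then show ?case using G by simp
next
  case (Suc n)
  let ?W = "Gi U G n"
  have Wsp: "?W \<subseteq> space M \<times> UNIV" using sets.sets_into_space[OF Suc] by (simp add: space_pair_measure)
  have sp: "space M \<in> sets (completion M)" using sets.top[of "completion M"] by simp
  have R: "space M \<times> U n \<in> sets (completion M \<Otimes>\<^sub>M borel)"
    using U[of n] sp by (intro pair_measureI) auto
  have P: "fst ` (?W \<inter> (space M \<times> U n)) \<in> sets (completion M)"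
    using Suc R by (intro proj_meas[OF fm] sets.Int)
  have e1: "?W \<inter> (UNIV \<times> U n) = ?W \<inter> (space M \<times> U n)" using Wsp by blast
  define P' where "P' = fst ` (?W \<inter> (space M \<times> U n))"
  have eq: "Gi U G (Suc n) = ?W \<inter> ((space M \<times> U n) \<union> ((space M - P') \<times> UNIV))"
  proof (rule set_eqI)
    fix z :: "'a \<times> 'b"
    obtain t x where z: "z = (t, x)" by (cases z)
    have "(t, x) \<in> ?W \<Longrightarrow> t \<in> space M" using Wsp by blast
    then show "z \<in> Gi U G (Suc n) \<longleftrightarrow> z \<in> ?W \<inter> ((space M \<times> U n) \<union> ((space M - P') \<times> UNIV))"
      unfolding z Gi.simps e1 P'_def[symmetric] by auto
  qed
  have "(space M - P') \<times> UNIV \<in> sets (completion M \<Otimes>\<^sub>M borel)"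
    using P sp unfolding P'_def by (intro pair_measureI) auto
  then show ?case unfolding eq using Suc R by (intro sets.Int sets.Un) auto
qed

lemma Gi_sec_Suc: "sec (Gi U G (Suc n)) t = (if sec (Gi U G n) t \<inter> U n = {} then sec (Gi U G n) t else sec (Gi U G n) t \<inter> U n)"
proof -
  have k: "t \<in> fst ` (Gi U G n \<inter> UNIV \<times> U n) \<longleftrightarrow> sec (Gi U G n) t \<inter> U n \<noteq> {}"
    unfolding sec_def by force
  show ?thesis
  proof (cases "sec (Gi U G n) t \<inter> U n = {}")
    case True
    then have "t \<notin> fst ` (Gi U G n \<inter> UNIV \<times> U n)" using k by simp
    then show ?thesis using True unfolding sec_def by simp
  next
    case False
    then have "t \<in> fst ` (Gi U G n \<inter> UNIV \<times> U n)" using k by simp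
    then show ?thesis using False unfolding sec_def by auto
  qed
qed

lemma Gi_dec: "m \<le> n \<Longrightarrow> Gi U G n \<subseteq> Gi U G m"
  by (induct rule: dec_induct) auto

lemma Sel_sub: "Sel U G \<subseteq> G"
proof -
  have "Sel U G \<subseteq> Gi U G 0" unfolding Sel_def by blast
  then show ?thesis by simp
qed

lemma Sel_meas:
  fixes G :: "('a \<times> 'b::polish_space) set"
  assumes fm: "finite_measure M" and G: "G \<in> sets (completion M \<Otimes>\<^sub>M borel)" and U: "\<And>n. open (U n)"
  shows "Sel U G \<in> sets (completion M \<Otimes>\<^sub>M borel)"
proof -
  have "(\<Inter>n\<in>UNIV. Gi U G n) \<in> sets (completion M \<Otimes>\<^sub>M borel)"
    using Gi_meas[OF fm G U] by (intro sets.countable_INT) auto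
  then show ?thesis unfolding Sel_def by simp
qed

lemma Sel_sec:
  assumes fin: "finite (sec G t)" and ne: "sec G t \<noteq> {}"
    and sep: "\<And>x y. x \<noteq> y \<Longrightarrow> \<exists>n. x \<in> U n \<and> y \<notin> U n"
  shows "\<exists>x. sec (Sel U G) t = {x}"
proof -
  define S where "S n = sec (Gi U G n) t" for n
  have secSel: "sec (Sel U G) t = (\<Inter>n. S n)" unfolding S_def sec_def Sel_def by auto
  have Sdec: "S n \<subseteq> S m" if "m \<le> n" for m n using Gi_dec[OF that, of U G] unfolding S_def sec_def by blast
  have SS: "S (Suc n) = (if S n \<inter> U n = {} then S n else S n \<inter> U n)" for n
    unfolding S_def by (rule Gi_sec_Suc)
  have Sne: "S n \<noteq> {}" for n
  proof (induct n)
    case 0 then show ?case using ne by (simp add: S_def)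
  next
    case (Suc n) then show ?case using SS[of n] by auto
  qed
  have nonempty: "(\<Inter>n. S n) \<noteq> {}"
  proof
    assume empty: "(\<Inter>n. S n) = {}"
    have "\<forall>x\<in>S 0. \<exists>n. x \<notin> S n" using empty by blast
    then obtain N where N: "\<And>x. x \<in> S 0 \<Longrightarrow> x \<notin> S (N x)" by metis
    define K where "K = (\<Sum>x\<in>S 0. N x)"
    have fin0: "finite (S 0)" using fin by (simp add: S_def)
    have NK: "N x \<le> K" if "x \<in> S 0" for x unfolding K_def using fin0 that by (intro member_le_sum) auto
    obtain y where y: "y \<in> S K" using Sne[of K] by blast
    have y0: "y \<in> S 0" using Sdec[of 0 K] y by blast
    then have "y \<notin> S (N y)" by (rule N)
    moreover have "S K \<subseteq> S (N y)" using Sdec NK[OF y0] by blast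
    ultimately show False using y by blast
  qed
  have uniq: "x = y" if "x \<in> (\<Inter>n. S n)" "y \<in> (\<Inter>n. S n)" for x y
  proof (rule ccontr)
    assume "x \<noteq> y"
    then obtain n where n: "x \<in> U n" "y \<notin> U n" using sep by blast
    have xy: "x \<in> S n" "y \<in> S (Suc n)" using that by auto
    then have "S n \<inter> U n \<noteq> {}" using n by blast
    then have "S (Suc n) = S n \<inter> U n" using SS[of n] by simp
    then show False using xy n by blast
  qed
  obtain x where x: "x \<in> (\<Inter>n. S n)" using nonempty by blast
  have "(\<Inter>n. S n) = {x}" using x uniq by blast
  then show ?thesis unfolding secSel by (rule exI)
qed

primrec Gs :: "(nat \<Rightarrow> 'b set) \<Rightarrow> ('a \<times> 'b) set \<Rightarrow> nat \<Rightarrow> ('a \<times> 'b) set" where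
  "Gs U G 0 = G"
| "Gs U G (Suc i) = Gs U G i - Sel U (Gs U G i)"

lemma Gs_meas:
  fixes G :: "('a \<times> 'b::polish_space) set"
  assumes fm: "finite_measure M" and G: "G \<in> sets (completion M \<Otimes>\<^sub>M borel)" and U: "\<And>n. open (U n)"
  shows "Gs U G i \<in> sets (completion M \<Otimes>\<^sub>M borel)"
proof (induct i)
  case 0 then show ?case using G by simp
next
  case (Suc i) then show ?case using Sel_meas[OF fm Suc U] by (simp add: sets.Diff)
qed

lemma Gs_dec: "m \<le> n \<Longrightarrow> Gs U G n \<subseteq> Gs U G m"
  by (induct rule: dec_induct) auto

lemma Gs_card:
  assumes fin: "finite (sec G t)" and sep: "\<And>x y. x \<noteq> y \<Longrightarrow> \<exists>n. x \<in> U n \<and> y \<notin> U n"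
  shows "finite (sec (Gs U G i) t) \<and> card (sec (Gs U G i) t) \<le> card (sec G t) - i"
proof (induct i)
  case 0 then show ?case using fin by simp
next
  case (Suc i)
  have eq: "sec (Gs U G (Suc i)) t = sec (Gs U G i) t - sec (Sel U (Gs U G i)) t" by (simp add: sec_Diff)
  show ?case
  proof (cases "sec (Gs U G i) t = {}")
    case True then show ?thesis unfolding eq by simp
  next
    case False
    obtain x where x: "sec (Sel U (Gs U G i)) t = {x}" using Sel_sec[OF _ False sep] Suc by blast
    have "x \<in> sec (Gs U G i) t" using x Sel_sub[of U "Gs U G i"] unfolding sec_def by blast
    then have c: "card (sec (Gs U G (Suc i)) t) = card (sec (Gs U G i) t) - 1"
      unfolding eq x using Suc by (simp add: card_Diff_singleton)
    have f: "finite (sec (Gs U G (Suc i)) t)" unfolding eq using Suc by simp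
    have "card (sec (Gs U G (Suc i)) t) \<le> card (sec G t) - Suc i" using c Suc by arith
    then show ?thesis using f by simp
  qed
qed

theorem theoremA6:
  fixes M :: "'a measure" and \<Gamma> :: "'a \<Rightarrow> 'b::polish_space set" and N :: nat
  assumes "finite_measure M"
    and "N \<ge> 1"
    and "\<forall>t\<in>space M. \<Gamma> t \<noteq> {} \<and> finite (\<Gamma> t) \<and> card (\<Gamma> t) \<le> N"
    and "{(t, x). t \<in> space M \<and> x \<in> \<Gamma> t} \<in> sets (completion M \<Otimes>\<^sub>M borel)"
  shows "\<exists>n \<le> N. \<exists>(Ts :: nat \<Rightarrow> 'a set) (s :: nat \<Rightarrow> 'a \<Rightarrow> 'b).
           (\<forall>i\<in>{1..n}. Ts i \<in> sets M \<and> s i \<in> measurable (restrict_space M (Ts i)) borel)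
         \<and> (\<exists>T0 \<in> sets M. emeasure M T0 = emeasure M (space M)
              \<and> (\<forall>t\<in>T0. \<Gamma> t = {s i t | i. i \<in> {1..n} \<and> t \<in> Ts i}))
         \<and> (\<forall>i\<in>{1..n}. \<forall>j\<in>{1..n}. i \<noteq> j \<longrightarrow> (\<forall>t \<in> Ts i \<inter> Ts j. s i t \<noteq> s j t))"
proof -
  note fm = assms(1)
  let ?C = "completion M"
  obtain U :: "nat \<Rightarrow> 'b set" where U: "\<And>n. open (U n)" and sep: "\<And>x y. x \<noteq> y \<Longrightarrow> \<exists>n. x \<in> U n \<and> y \<notin> U n"
    using sep_seq by blast
  define G where "G = {(t, x). t \<in> space M \<and> x \<in> \<Gamma> t}"
  have Gm: "G \<in> sets (?C \<Otimes>\<^sub>M borel)" using assms(4) unfolding G_def by simp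
  have secG: "t \<in> space M \<Longrightarrow> sec G t = \<Gamma> t" for t by (simp add: sec_def G_def)
  have secG0: "t \<notin> space M \<Longrightarrow> sec G t = {}" for t by (simp add: sec_def G_def)
  have finG: "finite (sec G t)" for t using secG secG0 assms(3) by (cases "t \<in> space M") auto
  have cardG: "card (sec G t) \<le> N" for t using secG secG0 assms(3) by (cases "t \<in> space M") auto
  define H where "H i = Sel U (Gs U G i)" for i
  define T' where "T' i = fst ` H (i - 1)" for i
  define s where "s i t = (THE x. (t, x) \<in> H (i - 1))" for i t
  have Gsm: "Gs U G i \<in> sets (?C \<Otimes>\<^sub>M borel)" for i by (rule Gs_meas[OF fm Gm U])
  have Hm: "H i \<in> sets (?C \<Otimes>\<^sub>M borel)" for i unfolding H_def by (rule Sel_meas[OF fm Gsm U])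
  have HG: "H i \<subseteq> Gs U G i" for i unfolding H_def by (rule Sel_sub)
  have GsG: "Gs U G i \<subseteq> G" for i using Gs_dec[of 0 i U G] by simp
  have Gsp: "G \<subseteq> space M \<times> UNIV" unfolding G_def by auto
  have Hsec: "sec (H i) t = {THE x. (t, x) \<in> H i}" if "t \<in> fst ` H i" for i t
  proof -
    have ne: "sec (H i) t \<noteq> {}" using that unfolding sec_def by force
    then have ne2: "sec (Gs U G i) t \<noteq> {}" using HG[of i] unfolding sec_def by blast
    have fin: "finite (sec (Gs U G i) t)" using Gs_card[OF finG sep] by blast
    obtain x where x: "sec (H i) t = {x}" using Sel_sec[OF fin ne2 sep] unfolding H_def by blast
    then have "(THE x. (t, x) \<in> H i) = x" unfolding sec_def by (intro the_equality) blast+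
    then show ?thesis using x by simp
  qed
  have sH: "(t, s i t) \<in> H (i - 1)" if "t \<in> T' i" for i t
  proof -
    have "sec (H (i - 1)) t = {s i t}" using Hsec[of t "i - 1"] that unfolding T'_def s_def by simp
    then show ?thesis unfolding sec_def by blast
  qed
  have sH2: "x = s i t" if "t \<in> T' i" "(t, x) \<in> H (i - 1)" for i t x
  proof -
    have "sec (H (i - 1)) t = {s i t}" using Hsec[of t "i - 1"] that(1) unfolding T'_def s_def by simp
    then show ?thesis using that(2) unfolding sec_def by blast
  qed
  have T'm: "T' i \<in> sets ?C" for i unfolding T'_def by (rule proj_meas[OF fm Hm])
  have T'sp: "T' i \<subseteq> space M" for i unfolding T'_def using HG GsG Gsp by fastforce
  have smeas: "s i \<in> measurable (restrict_space ?C (T' i)) borel" for i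
  proof (rule measurableI)
    fix B :: "'b set" assume B: "B \<in> sets borel"
    have sp: "space (restrict_space ?C (T' i)) = T' i" using T'sp[of i] by (auto simp: space_restrict_space)
    have eq: "s i -` B \<inter> T' i = fst ` (H (i - 1) \<inter> (space M \<times> B))"
    proof (intro equalityI subsetI)
      fix t assume t: "t \<in> s i -` B \<inter> T' i"
      then have "(t, s i t) \<in> H (i - 1) \<inter> (space M \<times> B)" using sH[of t i] T'sp[of i] by auto
      then show "t \<in> fst ` (H (i - 1) \<inter> (space M \<times> B))" by force
    next
      fix t assume "t \<in> fst ` (H (i - 1) \<inter> (space M \<times> B))"
      then obtain x where x: "(t, x) \<in> H (i - 1)" "x \<in> B" by force
      then have tT: "t \<in> T' i" unfolding T'_def by force
      then have "x = s i t" using sH2 x(1) by blast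
      then show "t \<in> s i -` B \<inter> T' i" using x tT by simp
    qed
    have "H (i - 1) \<inter> (space M \<times> B) \<in> sets (?C \<Otimes>\<^sub>M borel)"
      using Hm B sets.top[of ?C] by (intro sets.Int pair_measureI) auto
    then have "s i -` B \<inter> T' i \<in> sets ?C" unfolding eq by (rule proj_meas[OF fm])
    moreover have "T' i \<inter> space ?C \<in> sets ?C" using T'm[of i] T'sp[of i] by (simp add: Int_absorb2)
    ultimately show "s i -` B \<inter> space (restrict_space ?C (T' i)) \<in> sets (restrict_space ?C (T' i))"
      unfolding sp using sets_restrict_space_iff[of "T' i" ?C] by simp
  qed simp
  have "\<forall>i. \<exists>Z. Z \<in> null_sets M \<and> T' i - Z \<in> sets M \<and> s i \<in> measurable (restrict_space M (T' i - Z)) borel"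
    using compl_fix[OF T'm smeas] by blast
  then have "\<exists>Z. \<forall>i. Z i \<in> null_sets M \<and> T' i - Z i \<in> sets M \<and> s i \<in> measurable (restrict_space M (T' i - Z i)) borel"
    by (rule choice)
  then obtain Z where Z: "\<And>i. Z i \<in> null_sets M" "\<And>i. T' i - Z i \<in> sets M"
      "\<And>i. s i \<in> measurable (restrict_space M (T' i - Z i)) borel" by blast
  define Z' where "Z' = (\<Union>i\<in>{1..N}. Z i)"
  have Z'null: "Z' \<in> null_sets M" unfolding Z'_def using Z(1) by (intro null_sets_UN') auto
  have Z's: "Z' \<in> sets M" using Z'null by auto
  define Ts where "Ts i = T' i - Z'" for i
  have cov: "sec G t = (\<Union>i<n. sec (H i) t) \<union> sec (Gs U G n) t" for t n
  proof (induct n)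
    case 0 then show ?case by simp
  next
    case (Suc n)
    have "sec (Gs U G n) t = sec (H n) t \<union> sec (Gs U G (Suc n)) t"
      using HG[of n] unfolding sec_Diff Gs.simps H_def[symmetric] unfolding sec_def by blast
    then show ?case using Suc by (auto simp: lessThan_Suc)
  qed
  have GsN: "sec (Gs U G N) t = {}" for t
  proof -
    have "finite (sec (Gs U G N) t) \<and> card (sec (Gs U G N) t) \<le> card (sec G t) - N"
      by (rule Gs_card[OF finG sep])
    then show ?thesis using cardG[of t] by auto
  qed
  have Gam: "\<Gamma> t = {s i t | i. i \<in> {1..N} \<and> t \<in> T' i}" if "t \<in> space M" for t
  proof -
    have G1: "\<Gamma> t = (\<Union>i<N. sec (H i) t)" using cov[of t N] GsN[of t] secG[OF that] by simp
    show ?thesis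
    proof (intro equalityI subsetI)
      fix x assume "x \<in> \<Gamma> t"
      then obtain i where i: "i < N" "x \<in> sec (H i) t" using G1 by blast
      then have tT: "t \<in> T' (Suc i)" unfolding T'_def sec_def by force
      have "x = s (Suc i) t" using sH2[OF tT] i(2) unfolding sec_def by simp
      then show "x \<in> {s i t | i. i \<in> {1..N} \<and> t \<in> T' i}" using tT i(1) by force
    next
      fix x assume "x \<in> {s i t | i. i \<in> {1..N} \<and> t \<in> T' i}"
      then obtain i where i: "i \<in> {1..N}" "t \<in> T' i" "x = s i t" by blast
      have "x \<in> sec (H (i - 1)) t" using sH[OF i(2)] i(3) unfolding sec_def by simp
      moreover have "i - 1 < N" using i(1) by auto
      ultimately show "x \<in> \<Gamma> t" using G1 by blast
    qed
  qed
  have dist: "s i t \<noteq> s j t" if "1 \<le> i" "i < j" "t \<in> T' i" "t \<in> T' j" for i j t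
  proof -
    have "(t, s j t) \<in> H (j - 1)" by (rule sH[OF that(4)])
    then have "(t, s j t) \<in> Gs U G (j - 1)" using HG by blast
    moreover have "Gs U G (j - 1) \<subseteq> Gs U G (Suc (i - 1))" using that by (intro Gs_dec) auto
    ultimately have "(t, s j t) \<in> Gs U G (i - 1) - H (i - 1)" unfolding Gs.simps H_def by blast
    moreover have "(t, s i t) \<in> H (i - 1)" by (rule sH[OF that(3)])
    ultimately show ?thesis by auto
  qed
  show ?thesis
  proof (intro exI[of _ N] conjI)
    show "N \<le> N" by simp
  next
    show "\<exists>(Ts :: nat \<Rightarrow> 'a set) (s :: nat \<Rightarrow> 'a \<Rightarrow> 'b).
           (\<forall>i\<in>{1..N}. Ts i \<in> sets M \<and> s i \<in> measurable (restrict_space M (Ts i)) borel)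
         \<and> (\<exists>T0 \<in> sets M. emeasure M T0 = emeasure M (space M)
              \<and> (\<forall>t\<in>T0. \<Gamma> t = {s i t | i. i \<in> {1..N} \<and> t \<in> Ts i}))
         \<and> (\<forall>i\<in>{1..N}. \<forall>j\<in>{1..N}. i \<noteq> j \<longrightarrow> (\<forall>t \<in> Ts i \<inter> Ts j. s i t \<noteq> s j t))"
    proof (intro exI[of _ Ts] exI[of _ s] conjI ballI impI)
      fix i assume i: "i \<in> {1..N}"
      have ZZ: "Z i \<subseteq> Z'" unfolding Z'_def using i by blast
      have e: "Ts i = (T' i - Z i) \<inter> (T' i - Z')" unfolding Ts_def using ZZ by blast
      have e2: "Ts i = (T' i - Z i) - Z'" unfolding Ts_def using ZZ by blast
      have Tsm: "Ts i \<in> sets M" unfolding e2 using Z(2)[of i] Z's by (rule sets.Diff)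
      then show "Ts i \<in> sets M" .
      have "s i \<in> measurable (restrict_space (restrict_space M (T' i - Z i)) (T' i - Z')) borel"
        by (rule measurable_restrict_space1[OF Z(3)])
      moreover have "restrict_space (restrict_space M (T' i - Z i)) (T' i - Z') = restrict_space M (Ts i)"
      proof -
        have "(T' i - Z') \<inter> space M = Ts i" unfolding Ts_def using T'sp[of i] by blast
        then have "(T' i - Z') \<inter> space M \<in> sets M" using Tsm by simp
        moreover have "(T' i - Z i) \<inter> space M = T' i - Z i" using T'sp[of i] by blast
        moreover have "(T' i - Z i) \<inter> space M \<in> sets M" using Z(2)[of i] calculation(2) by simp
        ultimately show ?thesis unfolding e by (simp add: restrict_restrict_space)
      qed
      ultimately show "s i \<in> measurable (restrict_space M (Ts i)) borel" by simp
    next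
      show "\<exists>T0 \<in> sets M. emeasure M T0 = emeasure M (space M) \<and> (\<forall>t\<in>T0. \<Gamma> t = {s i t | i. i \<in> {1..N} \<and> t \<in> Ts i})"
      proof (intro bexI[of _ "space M - Z'"] conjI ballI)
        show "space M - Z' \<in> sets M" using Z's by auto
        show "emeasure M (space M - Z') = emeasure M (space M)" using Z'null by (intro emeasure_Diff_null_set) auto
        fix t assume t: "t \<in> space M - Z'"
        have "\<And>i. t \<in> Ts i \<longleftrightarrow> t \<in> T' i" using t unfolding Ts_def by blast
        then show "\<Gamma> t = {s i t | i. i \<in> {1..N} \<and> t \<in> Ts i}" using Gam[of t] t by simp
      qed
    next
      fix i j t assume ij: "i \<in> {1..N}" "j \<in> {1..N}" "i \<noteq> j" and t: "t \<in> Ts i \<inter> Ts j"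
      then have tt: "t \<in> T' i" "t \<in> T' j" unfolding Ts_def by auto
      show "s i t \<noteq> s j t"
      proof (cases "i < j")
        case True then show ?thesis using dist[of i j t] ij tt by auto
      next
        case False then have "j < i" using ij by auto
        then show ?thesis using dist[of j i t] ij tt by auto
      qed
    qed
  qed
qed

end
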